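(* Let $n\ge1$ and let $\mathcal F$ be a collection of even-cardinality subsets of $[n]$ such that for every integer $r$ with $0\le r\le \lfloor n/2\rfloor$, the members of $\mathcal F$ of size $2r$ form the collection of bases of a sparse paving matroid with ground set $[n]$ and rank $2r$. Then $\mathcal F$ is the collection of feasible sets of a delta-matroid with ground set $[n]$.
   Context: A matroid is paving if it has no circuits of size strictly smaller than its rank, and sparse paving if both it and its dual are paving. A delta-matroid $(E,\mathcal F)$ consists of a finite ground set $E$ and a non-empty collection $\mathcal F$ of subsets of $E$ (the feasible sets) satisfying the symmetric exchange axiom: for all $X,Y\in\mathcal F$ and every $e\in X\triangle Y$ there exists $f\in X\triangle Y$ (possibly $f=e$) with $X\triangle\{e,f\}\in\mathcal F$. $[n]=\{1,\dots,n\}$. *)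

theory Defs
  imports Main
begin

definition matroid_bases :: "'a set \<Rightarrow> 'a set set \<Rightarrow> bool" where
  "matroid_bases E \<B> \<longleftrightarrow> finite E \<and> \<B> \<noteq> {} \<and> (\<forall>X\<in>\<B>. X \<subseteq> E) \<and>
     (\<forall>B1\<in>\<B>. \<forall>B2\<in>\<B>. \<forall>x\<in>B1 - B2. \<exists>y\<in>B2 - B1. insert y (B1 - {x}) \<in> \<B>)"

definition m_indep :: "'a set set \<Rightarrow> 'a set \<Rightarrow> bool" where
  "m_indep \<B> X \<longleftrightarrow> (\<exists>B\<in>\<B>. X \<subseteq> B)"

definition m_circuit :: "'a set \<Rightarrow> 'a set set \<Rightarrow> 'a set \<Rightarrow> bool" where
  "m_circuit E \<B> C \<longleftrightarrow> C \<subseteq> E \<and> \<not> m_indep \<B> C \<and> (\<forall>D. D \<subset> C \<longrightarrow> m_indep \<B> D)"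

text \<open>Rank of the matroid = common cardinality of its bases.\<close>
definition m_rank :: "'a set set \<Rightarrow> nat" where
  "m_rank \<B> = card (SOME B. B \<in> \<B>)"

definition dual_bases :: "'a set \<Rightarrow> 'a set set \<Rightarrow> 'a set set" where
  "dual_bases E \<B> = (\<lambda>B. E - B) ` \<B>"

definition paving :: "'a set \<Rightarrow> 'a set set \<Rightarrow> bool" where
  "paving E \<B> \<longleftrightarrow> matroid_bases E \<B> \<and> (\<forall>C. m_circuit E \<B> C \<longrightarrow> m_rank \<B> \<le> card C)"

definition sparse_paving :: "'a set \<Rightarrow> 'a set set \<Rightarrow> bool" where
  "sparse_paving E \<B> \<longleftrightarrow> paving E \<B> \<and> paving E (dual_bases E \<B>)"

definition symdiff :: "'a set \<Rightarrow> 'a set \<Rightarrow> 'a set" where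
  "symdiff X Y = (X - Y) \<union> (Y - X)"

definition delta_matroid :: "'a set \<Rightarrow> 'a set set \<Rightarrow> bool" where
  "delta_matroid E \<F> \<longleftrightarrow> finite E \<and> \<F> \<noteq> {} \<and> (\<forall>X\<in>\<F>. X \<subseteq> E) \<and>
     (\<forall>X\<in>\<F>. \<forall>Y\<in>\<F>. \<forall>e\<in>symdiff X Y. \<exists>f\<in>symdiff X Y. symdiff X {e, f} \<in> \<F>)"

end

theory Submission
  imports Defs
begin

lemma rank_eq:
  assumes "B \<noteq> {}" "\<forall>X\<in>B. card X = k"
  shows "m_rank B = k"
proof -
  have "(SOME X. X \<in> B) \<in> B" using assms(1) by (meson ex_in_conv someI_ex)
  thus ?thesis using assms(2) unfolding m_rank_def by blast
qed

lemma indep_small: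
  assumes pav: "paving E B" and cardB: "\<forall>X\<in>B. card X = k"
    and XE: "X \<subseteq> E" and cX: "card X < k"
  shows "m_indep B X"
proof (rule ccontr)
  assume dep: "\<not> m_indep B X"
  have mb: "matroid_bases E B" using pav unfolding paving_def by blast
  hence finE: "finite E" and ne: "B \<noteq> {}" unfolding matroid_bases_def by auto
  have finX: "finite X" using finE XE finite_subset by blast
  define P where "P = (\<lambda>c. \<exists>Z. Z \<subseteq> X \<and> \<not> m_indep B Z \<and> card Z = c)"
  have "P (card X)" using dep unfolding P_def by blast
  hence "P (LEAST c. P c)" by (rule LeastI)
  then obtain C where C: "C \<subseteq> X" "\<not> m_indep B C" "card C = (LEAST c. P c)"
    unfolding P_def by blast
  have finC: "finite C" using C(1) finX finite_subset by blast
  have circ: "m_circuit E B C"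
    unfolding m_circuit_def
  proof (intro conjI allI impI)
    show "C \<subseteq> E" using C(1) XE by blast
    show "\<not> m_indep B C" by (rule C(2))
    fix D assume D: "D \<subset> C"
    show "m_indep B D"
    proof (rule ccontr)
      assume "\<not> m_indep B D"
      hence "P (card D)" unfolding P_def using D C(1) by blast
      hence "(LEAST c. P c) \<le> card D" by (rule Least_le)
      moreover have "card D < card C" using D finC psubset_card_mono by blast
      ultimately show False using C(3) by simp
    qed
  qed
  hence "m_rank B \<le> card C" using pav unfolding paving_def by blast
  moreover have "m_rank B = k" using rank_eq ne cardB by blast
  moreover have "card C \<le> card X" using C(1) finX card_mono by blast
  ultimately show False using cX by simp
qed

lemma P1:
  assumes pav: "paving E B" and cardB: "\<forall>X\<in>B. card X = k"
    and SE: "S \<subseteq> E" and cS: "card S + 1 = k"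
  shows "\<exists>a. a \<notin> S \<and> insert a S \<in> B"
proof -
  have "m_indep B S" using indep_small[OF pav cardB SE] cS by simp
  then obtain B0 where B0: "B0 \<in> B" "S \<subseteq> B0" unfolding m_indep_def by blast
  have mb: "matroid_bases E B" using pav unfolding paving_def by blast
  hence finE: "finite E" unfolding matroid_bases_def by auto
  have "B0 \<subseteq> E" using mb B0(1) unfolding matroid_bases_def by blast
  hence finB0: "finite B0" using finE finite_subset by blast
  have "card (B0 - S) = 1" using card_Diff_subset[OF _ B0(2)] finB0 B0 cardB cS
    by (metis add_diff_cancel_left' finite_subset)
  then obtain a where "B0 - S = {a}" using card_1_singletonE by blast
  hence "a \<notin> S" "B0 = insert a S" using B0(2) by auto
  thus ?thesis using B0(1) by blast
qed

lemma P2: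
  assumes sp: "sparse_paving E B" and cardB: "\<forall>X\<in>B. card X = k"
    and TE: "T \<subseteq> E" and cT: "card T = k + 1"
  shows "\<exists>a\<in>T. T - {a} \<in> B"
proof -
  have pav: "paving E B" and dpav: "paving E (dual_bases E B)"
    using sp unfolding sparse_paving_def by auto
  have mb: "matroid_bases E B" using pav unfolding paving_def by blast
  hence finE: "finite E" and sub: "\<forall>X\<in>B. X \<subseteq> E" unfolding matroid_bases_def by auto
  have cd: "\<forall>X\<in>dual_bases E B. card X = card E - k"
    unfolding dual_bases_def using cardB sub finE
    by (auto simp: card_Diff_subset finite_subset)
  have kE: "k + 1 \<le> card E" using cT TE finE card_mono by metis
  have "card (E - T) + 1 = card E - k"
    using card_Diff_subset[OF finite_subset[OF TE finE] TE] cT kE by simp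
  from P1[OF dpav cd _ this] obtain a where a: "a \<notin> E - T" "insert a (E - T) \<in> dual_bases E B"
    by blast
  then obtain X where X: "X \<in> B" "insert a (E - T) = E - X" unfolding dual_bases_def by blast
  have aE: "a \<in> E" using X(2) by blast
  hence aT: "a \<in> T" using a(1) by blast
  have "X = T - {a}" using X sub TE aT by blast
  thus ?thesis using X(1) aT by blast
qed

lemma key:
  assumes sp: "sparse_paving E B" and cardB: "\<forall>X\<in>B. card X = k"
    and SE: "S \<subseteq> E" and cS: "card S + 1 = k"
    and ab: "a \<in> E" "b \<in> E" "a \<notin> S" "b \<notin> S" "a \<noteq> b"
  shows "insert a S \<in> B \<or> insert b S \<in> B"
proof (rule ccontr)
  assume neg: "\<not> (insert a S \<in> B \<or> insert b S \<in> B)"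
  have pav: "paving E B" using sp unfolding sparse_paving_def by auto
  have mb: "matroid_bases E B" using pav unfolding paving_def by blast
  hence finE: "finite E" and exch: "\<forall>B1\<in>B. \<forall>B2\<in>B. \<forall>x\<in>B1 - B2. \<exists>y\<in>B2 - B1. insert y (B1 - {x}) \<in> B"
    unfolding matroid_bases_def by auto
  have finS: "finite S" using SE finE finite_subset by blast
  define T where "T = insert a (insert b S)"
  have cT: "card T = k + 1" unfolding T_def using finS ab cS by simp
  have TE: "T \<subseteq> E" unfolding T_def using ab SE by blast
  obtain x where x: "x \<in> T" "T - {x} \<in> B" using P2[OF sp cardB TE cT] by blast
  have Ta: "T - {a} = insert b S" and Tb: "T - {b} = insert a S" unfolding T_def using ab by auto
  have "x \<noteq> a" using x(2) Ta neg by force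
  moreover have "x \<noteq> b" using x(2) Tb neg by force
  ultimately have xS: "x \<in> S" using x(1) unfolding T_def by blast
  obtain c where c: "c \<notin> S" "insert c S \<in> B" using P1[OF pav cardB SE cS] by blast
  have ca: "c \<noteq> a" using c neg by blast
  have cb: "c \<noteq> b" using c neg by blast
  have "c \<in> insert c S - (T - {x})" unfolding T_def using c(1) ca cb by blast
  then obtain y where y: "y \<in> (T - {x}) - insert c S" "insert y (insert c S - {c}) \<in> B"
    using exch c(2) x(2) by blast
  have "insert c S - {c} = S" using c(1) by auto
  moreover have "y = a \<or> y = b" using y(1) unfolding T_def by blast
  ultimately show False using y(2) neg by metis
qed

lemma parity:
  assumes "finite A" "finite Bs" "e \<in> Bs"
    and "\<not> (\<exists>f g. f \<in> A \<and> g \<in> A \<and> f \<noteq> g)"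
    and "\<not> (\<exists>f g. f \<in> Bs - {e} \<and> g \<in> Bs - {e} \<and> f \<noteq> g)"
    and "even (card A + card Bs)"
  shows "(\<exists>f. A = {f} \<and> Bs = {e}) \<or> (\<exists>g. g \<noteq> e \<and> A = {} \<and> Bs = {e, g})"
proof -
  have hA: "A = {} \<or> (\<exists>f. A = {f})" using assms(4) by blast
  have hB: "Bs = {e} \<or> (\<exists>g. g \<noteq> e \<and> Bs = {e, g})" using assms(3,5) by blast
  show ?thesis using hA hB assms(6) by auto
qed

lemma card_split: "finite X \<Longrightarrow> card X = card (X \<inter> Y) + card (X - Y)"
  by (metis card_Un_disjoint Diff_disjoint Int_Diff_Un Int_Diff_disjoint finite_Diff finite_Int)

theorem lemma4p1:
  fixes n :: nat and \<F> :: "nat set set"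
  assumes "n \<ge> 1"
    and "\<forall>X\<in>\<F>. X \<subseteq> {1..n} \<and> even (card X)"
    and "\<forall>r::nat. r \<le> n div 2 \<longrightarrow>
           sparse_paving {1..n} {X\<in>\<F>. card X = 2 * r} \<and> m_rank {X\<in>\<F>. card X = 2 * r} = 2 * r"
  shows "delta_matroid {1..n} \<F>"
proof -
  let ?E = "{1..n::nat}"
  have nb: "insert a S \<in> \<F> \<or> insert b S \<in> \<F>"
    if "r \<le> n div 2" "S \<subseteq> ?E" "card S + 1 = 2*r" "a \<in> ?E" "b \<in> ?E" "a \<notin> S" "b \<notin> S" "a \<noteq> b"
    for r S a b
  proof -
    have sp: "sparse_paving ?E {X\<in>\<F>. card X = 2 * r}" using assms(3) that(1) by blast
    have "\<forall>X\<in>{X\<in>\<F>. card X = 2 * r}. card X = 2*r" by blast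
    from key[OF sp this that(2-8)] show ?thesis by blast
  qed
  have ne: "\<F> \<noteq> {}"
  proof -
    have "sparse_paving ?E {X\<in>\<F>. card X = 2 * 0}" using assms(3) by blast
    thus ?thesis unfolding sparse_paving_def paving_def matroid_bases_def by auto
  qed
  have cardle: "card X \<le> n" if "X \<subseteq> ?E" for X
    using card_mono[OF _ that] by simp
  have finF: "finite X" if "X \<in> \<F>" for X
    using assms(2) that finite_subset by blast
  show ?thesis
    unfolding delta_matroid_def
  proof (intro conjI ballI)
    show "finite ?E" by simp
    show "\<F> \<noteq> {}" by (rule ne)
    fix X assume "X \<in> \<F>" thus "X \<subseteq> ?E" using assms(2) by blast
  next
    fix X Y e assume X: "X \<in> \<F>" and Y: "Y \<in> \<F>" and e: "e \<in> symdiff X Y"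
    have XE: "X \<subseteq> ?E" and YE: "Y \<subseteq> ?E" using X Y assms(2) by auto
    have finX: "finite X" and finY: "finite Y" using X Y finF by auto
    obtain r where r: "card X = 2*r" using X assms(2) by (metis evenE)
    have rle: "r \<le> n div 2" using cardle[OF XE] r by simp
    have par: "even (card (X - Y) + card (Y - X))"
    proof -
      have "card X = card (X \<inter> Y) + card (X - Y)" using card_split finX by blast
      moreover have "card Y = card (X \<inter> Y) + card (Y - X)" using card_split[OF finY, of X] by (simp add: Int_commute)
      moreover have "even (card Y)" using Y assms(2) by blast
      ultimately show ?thesis using r by presburger
    qed
    show "\<exists>f\<in>symdiff X Y. symdiff X {e, f} \<in> \<F>"
    proof (cases "e \<in> X")
      case False
      hence eY: "e \<in> Y - X" using e unfolding symdiff_def by blast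
      hence eE: "e \<in> ?E" using YE by blast
      show ?thesis
      proof (cases "\<exists>f g. f \<in> X - Y \<and> g \<in> X - Y \<and> f \<noteq> g")
        case True
        then obtain f g where fg: "f \<in> X - Y" "g \<in> X - Y" "f \<noteq> g" by blast
        define S where "S = insert e X - {f, g}"
        have "card {f, g} \<le> card X" using fg finX card_mono[of X "{f,g}"] by blast
        hence "2 \<le> card X" using fg(3) by simp
        hence cS: "card S + 1 = 2*r" unfolding S_def using finX fg False r by simp
        have SE: "S \<subseteq> ?E" unfolding S_def using XE eE by blast
        have fE: "f \<in> ?E" "g \<in> ?E" using fg XE by auto
        have nS: "g \<notin> S" "f \<notin> S" unfolding S_def by auto
        have "insert g S \<in> \<F> \<or> insert f S \<in> \<F>"
          using nb[OF rle SE cS fE(2) fE(1) nS] fg(3) by metis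
        moreover have "insert g S = symdiff X {e, f}" "insert f S = symdiff X {e, g}"
          unfolding S_def symdiff_def using fg False by auto
        moreover have "f \<in> symdiff X Y" "g \<in> symdiff X Y" using fg unfolding symdiff_def by auto
        ultimately show ?thesis by metis
      next
        case nA: False
        show ?thesis
        proof (cases "\<exists>f g. f \<in> (Y - X) - {e} \<and> g \<in> (Y - X) - {e} \<and> f \<noteq> g")
          case True
          then obtain f g where fg: "f \<in> (Y - X) - {e}" "g \<in> (Y - X) - {e}" "f \<noteq> g" by blast
          define S where "S = insert e X"
          have cS: "card S + 1 = 2*(r+1)" unfolding S_def using finX False r by simp
          have SE: "S \<subseteq> ?E" unfolding S_def using XE eE by blast
          have fE: "f \<in> ?E" "g \<in> ?E" using fg YE by auto
          have "card (insert f S) \<le> n" using cardle SE fE by simp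
          hence "r + 1 \<le> n div 2" using cS fg finX unfolding S_def by simp
          moreover have nS: "f \<notin> S" "g \<notin> S" unfolding S_def using fg by auto
          ultimately have "insert f S \<in> \<F> \<or> insert g S \<in> \<F>"
            using nb[OF _ SE cS fE nS] fg(3) by metis
          moreover have "insert f S = symdiff X {e, f}" "insert g S = symdiff X {e, g}"
            unfolding S_def symdiff_def using fg False by auto
          moreover have "f \<in> symdiff X Y" "g \<in> symdiff X Y" using fg unfolding symdiff_def by auto
          ultimately show ?thesis by metis
        next
          case nB: False
          have "(\<exists>f. X - Y = {f} \<and> Y - X = {e}) \<or> (\<exists>g. g \<noteq> e \<and> X - Y = {} \<and> Y - X = {e, g})"
            using parity[of "X - Y" "Y - X" e] finX finY eY nA nB par by auto
          thus ?thesis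
          proof
            assume "\<exists>f. X - Y = {f} \<and> Y - X = {e}"
            then obtain f where f: "X - Y = {f}" "Y - X = {e}" by blast
            have "symdiff X {e, f} = Y" unfolding symdiff_def using f by blast
            moreover have "f \<in> symdiff X Y" using f unfolding symdiff_def by blast
            ultimately show ?thesis using Y by metis
          next
            assume "\<exists>g. g \<noteq> e \<and> X - Y = {} \<and> Y - X = {e, g}"
            then obtain g where g: "g \<noteq> e" "X - Y = {}" "Y - X = {e, g}" by blast
            have "symdiff X {e, g} = Y" unfolding symdiff_def using g by blast
            moreover have "g \<in> symdiff X Y" using g unfolding symdiff_def by blast
            ultimately show ?thesis using Y by metis
          qed
        qed
      qed
    next
      case True
      hence eX: "e \<in> X - Y" using e unfolding symdiff_def by blast
      show ?thesis
      proof (cases "\<exists>f g. f \<in> Y - X \<and> g \<in> Y - X \<and> f \<noteq> g")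
        case True
        then obtain f g where fg: "f \<in> Y - X" "g \<in> Y - X" "f \<noteq> g" by blast
        define S where "S = X - {e}"
        have cS: "card S + 1 = 2*r" unfolding S_def using finX eX r
          by (metis DiffD1 Suc_eq_plus1 card_Suc_Diff1)
        have SE: "S \<subseteq> ?E" unfolding S_def using XE by blast
        have fE: "f \<in> ?E" "g \<in> ?E" using fg YE by auto
        have nS: "f \<notin> S" "g \<notin> S" unfolding S_def using fg by auto
        have "insert f S \<in> \<F> \<or> insert g S \<in> \<F>"
          using nb[OF rle SE cS fE nS] fg(3) by metis
        moreover have "insert f S = symdiff X {e, f}" "insert g S = symdiff X {e, g}"
          unfolding S_def symdiff_def using fg eX by auto
        moreover have "f \<in> symdiff X Y" "g \<in> symdiff X Y" using fg unfolding symdiff_def by auto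
        ultimately show ?thesis by metis
      next
        case nA: False
        show ?thesis
        proof (cases "\<exists>f g. f \<in> (X - Y) - {e} \<and> g \<in> (X - Y) - {e} \<and> f \<noteq> g")
          case True
          then obtain f g where fg: "f \<in> (X - Y) - {e}" "g \<in> (X - Y) - {e}" "f \<noteq> g" by blast
          define S where "S = X - {e, f, g}"
          have "card S = card X - 3" unfolding S_def using finX fg eX
            by (simp add: card_Diff_subset)
          moreover have "3 \<le> card X"
          proof -
            have "{e, f, g} \<subseteq> X" using fg eX by blast
            hence "card {e, f, g} \<le> card X" using finX card_mono by blast
            thus ?thesis using fg by simp
          qed
          ultimately have cS: "card S + 1 = 2*(r - 1)" using r by simp
          have SE: "S \<subseteq> ?E" unfolding S_def using XE by blast
          have fE: "f \<in> ?E" "g \<in> ?E" using fg XE by auto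
          have "r - 1 \<le> n div 2" using rle by simp
          moreover have nS: "g \<notin> S" "f \<notin> S" unfolding S_def by auto
          ultimately have "insert g S \<in> \<F> \<or> insert f S \<in> \<F>"
            using nb[OF _ SE cS fE(2) fE(1) nS] fg(3) by metis
          moreover have "insert g S = symdiff X {e, f}" "insert f S = symdiff X {e, g}"
            unfolding S_def symdiff_def using fg eX by auto
          moreover have "f \<in> symdiff X Y" "g \<in> symdiff X Y" using fg unfolding symdiff_def by auto
          ultimately show ?thesis by metis
        next
          case nB: False
          have par': "even (card (Y - X) + card (X - Y))" using par by (simp add: add.commute)
          have "(\<exists>f. Y - X = {f} \<and> X - Y = {e}) \<or> (\<exists>g. g \<noteq> e \<and> Y - X = {} \<and> X - Y = {e, g})"
            using parity[of "Y - X" "X - Y" e] finX finY eX nA nB par' by auto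
          thus ?thesis
          proof
            assume "\<exists>f. Y - X = {f} \<and> X - Y = {e}"
            then obtain f where f: "Y - X = {f}" "X - Y = {e}" by blast
            have "symdiff X {e, f} = Y" unfolding symdiff_def using f by blast
            moreover have "f \<in> symdiff X Y" using f unfolding symdiff_def by blast
            ultimately show ?thesis using Y by metis
          next
            assume "\<exists>g. g \<noteq> e \<and> Y - X = {} \<and> X - Y = {e, g}"
            then obtain g where g: "g \<noteq> e" "Y - X = {}" "X - Y = {e, g}" by blast
            have "symdiff X {e, g} = Y" unfolding symdiff_def using g by blast
            moreover have "g \<in> symdiff X Y" using g unfolding symdiff_def by blast
            ultimately show ?thesis using Y by metis
          qed
        qed
      qed
    qed
  qed
qed

end
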